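(* Let $\varphi\in ICPCC^s_{loc}(\mathcal A^k,C^*_{\mathcal E}(\mathcal D))$, $m=[\frac{k+1}{2}]$, and let $(\{\pi_p\}_{p=1}^m,V,\{\mathcal K;\mathcal F;\mathcal G\})$ with $\mathcal F=\{\mathcal K_\ell:\ell\in\Omega\}$ be a Stinespring triple for $\varphi$. Then there exists another Stinespring triple $(\{\widetilde\pi_p\}_{p=1}^m,\widetilde V,\{\widetilde{\mathcal K};\widetilde{\mathcal F};\widetilde{\mathcal G}\})$ for $\varphi$, with $\widetilde{\mathcal F}=\{\widetilde{\mathcal K}_\ell:\ell\in\Omega\}$, such that $\widetilde{\mathcal K}_\ell\subseteq\mathcal K_\ell$ for every $\ell\in\Omega$ and $$\widetilde{\mathcal K}_\ell=\overline{\operatorname{span}}\{\widetilde\pi_1(a_1)\cdots\widetilde\pi_m(a_m)\widetilde Vh: a_1,\dots,a_m\in\mathcal A,\ h\in\mathcal H_\ell\}\quad\text{for every }\ell\in\Omega,$$ i.e. the new triple is minimal.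
   Context: Locally $C^*$-algebras. A locally $C^*$-algebra is a $*$-algebra complete in the locally convex topology given by an upward filtered family of $C^*$-seminorms. Throughout, $\mathcal A$ is a unital locally $C^*$-algebra with upward filtered family of $C^*$-seminorms $\{p_\alpha:\alpha\in\Lambda\}$. For $\alpha\in\Lambda$ let $\mathcal A_\alpha=\mathcal A/\{a:p_\alpha(a)=0\}$ (a $C^*$-algebra with the norm induced by $p_\alpha$) and $\pi_\alpha:\mathcal A\to\mathcal A_\alpha$ the quotient map. For $a,b$ write $a=_\alpha b$ if $p_\alpha(a-b)=0$, and $a\ge_\alpha 0$ if $\pi_\alpha(a)\ge 0$ in $\mathcal A_\alpha$. For $n\in\mathbb N$, $M_n(\mathcal A)$ is a locally $C^*$-algebra with $C^*$-seminorms $p^n_\alpha$ (the norm of the image in $M_n(\mathcal A_\alpha)$), and the notations $=_\alpha,\ge_\alpha$ apply to it; the same conventions ($=_\ell$, $\ge_\ell$) apply to any locally $C^*$-algebra whose seminorms are indexed by $\ell$. Quantized domains. A quantized domain is a triple $\{\mathcal H;\mathcal E;\mathcal D\}$ where $\mathcal H$ is a Hilbert space, $\mathcal E=\{\mathcal H_\ell:\ell\in\Omega\}$ is a family of closed subspaces indexed by a directed set $\Omega$ with $\mathcal H_\ell\subseteq\mathcal H_{\ell'}$ whenever $\ell\le\ell'$, and $\mathcal D=\bigcup_{\ell}\mathcal H_\ell$ is dense in $\mathcal H$. With $P_\ell$ the orthogonal projection onto $\mathcal H_\ell$, $C^*_{\mathcal E}(\mathcal D)$ is the set of linear operators $T:\mathcal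 D\to\mathcal D$ with $TP_\ell=P_\ell TP_\ell$ and $P_\ell T\subseteq TP_\ell$ for all $\ell$, with $T|_{\mathcal H_\ell}$ bounded; it is a unital locally $C^*$-algebra with involution $T^*:=T^{\bigstar}|_{\mathcal D}$ ($T^\bigstar$ the Hilbert space adjoint) and $C^*$-seminorms $\|T\|_\ell=\|T|_{\mathcal H_\ell}\|$, $\ell\in\Omega$. $M_n(C^*_{\mathcal E}(\mathcal D))$ is identified with $C^*_{\mathcal E^n}(\mathcal D^n)$ for the quantized domain $\{\mathcal H^n;\{\mathcal H_\ell^n\};\mathcal D^n\}$ (n-fold direct sums). Throughout, $\{\mathcal H;\mathcal E;\mathcal D\}$ with $\mathcal E=\{\mathcal H_\ell:\ell\in\Omega\}$ is a fixed quantized domain. A unital $*$-homomorphism $\pi:\mathcal A\to C^*_{\mathcal F}(\mathcal G)$, for a quantized domain $\{\mathcal K;\mathcal F;\mathcal G\}$ with $\mathcal F=\{\mathcal K_\ell:\ell\in\Omega\}$, is local contractive if for each $\ell\in\Omega$ there is $\alpha\in\Lambda$ with $\|\pi(a)\|_\ell\le p_\alpha(a)$ for all $a\in\mathcal A$. Multilinear maps. Let $k\ge 1$ and $m=[\frac{k+1}{2}]$. For a $k$-linear map $\varphi:\mathcal A^k\to\mathcal B$, $\mathcal B=C^*_{\mathcal E}(\mathcal D)$ with seminorms $q_\ell=\|\cdot\|_\ell$, its amplification $\varphi_n:M_n(\mathcal A)^k\to M_n(\mathcal B)$ is $\varphi_n(A_1,\dots,A_k)=\big[\sum_{r_1,\dots,r_{k-1}=1}^n\varphi(a_{1,ir_1},a_{2,r_1r_2},\dots,a_{k,r_{k-1}j})\big]_{i,j=1}^n$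 for $A_t=[a_{t,ij}]$. $\varphi$ is symmetric if $\varphi(a_1,\dots,a_k)^*=\varphi(a_k^*,\dots,a_1^* )$ for all $a_i$. $\varphi$ is invariant if, for $k=2m-1$, $\varphi(a_1c_1,\dots,a_{m-1}c_{m-1},a_m,a_{m+1},\dots,a_{2m-1})=\varphi(a_1,\dots,a_{m-1},a_m,c_{m-1}a_{m+1},\dots,c_1a_{2m-1})$, and for $k=2m$, $\varphi(a_1c_1,\dots,a_mc_m,a_{m+1},\dots,a_{2m})=\varphi(a_1,\dots,a_m,c_ma_{m+1},\dots,c_1a_{2m})$, for all $a_i,c_j\in\mathcal A$. $\varphi$ is local completely contractive if for each $\ell\in\Omega$ there is $\alpha_\ell\in\Lambda$ such that for all $n$ and $A_1,\dots,A_k\in M_n(\mathcal A)$, $q^n_\ell(\varphi_n(A_1,\dots,A_k))\le\max_i p^n_{\alpha_\ell}(A_i)$. $\varphi$ is local completely positive if for each $\ell\in\Omega$ there is $\alpha_\ell\in\Lambda$ such that for all $n$ and $A_1,\dots,A_k\in M_n(\mathcal A)$: $\varphi_n(A_1,\dots,A_k)\ge_\ell 0$ whenever $A_p^*=_{\alpha_\ell}A_{k+1-p}$ for $p=1,\dots,m$ and, if $k$ is odd, additionally $A_m\ge_{\alpha_\ell}0$; and $\varphi_n(A_1,\dots,A_k)=_\ell 0$ whenever $A_i=_{\alpha_\ell}0$ for some $i$. $ICPCC^s_{loc}(\mathcal A^k,\mathcal B)$ denotes the set of symmetric, invariant, local completely contractive and local completely positive $k$-linear maps $\mathcal A^k\to\mathcal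 B$. Stinespring triples. For $\varphi\in ICPCC^s_{loc}(\mathcal A^k,C^*_{\mathcal E}(\mathcal D))$, a Stinespring triple for $\varphi$ is $(\{\pi_p\}_{p=1}^m,V,\{\mathcal K;\mathcal F;\mathcal G\})$ where $\{\mathcal K;\mathcal F;\mathcal G\}$ is a quantized domain with $\mathcal F=\{\mathcal K_\ell:\ell\in\Omega\}$ (same index set $\Omega$), $V\in\mathcal B(\mathcal H,\mathcal K)$ is a contraction with $V(\mathcal H_\ell)\subseteq\mathcal K_\ell$ for all $\ell$, $\pi_1,\dots,\pi_m:\mathcal A\to C^*_{\mathcal F}(\mathcal G)$ are pairwise commuting unital local contractive $*$-homomorphisms, and for all $a_1,\dots,a_k\in\mathcal A$ and $h\in\mathcal D$: if $k=2m-1$, $\varphi(a_1,\dots,a_k)h=V^*\pi_1(a_m)\pi_2(a_{m-1}a_{m+1})\cdots\pi_m(a_1a_{2m-1})Vh$; if $k=2m$, $\varphi(a_1,\dots,a_k)h=V^*\pi_1(a_ma_{m+1})\pi_2(a_{m-1}a_{m+2})\cdots\pi_m(a_1a_{2m})Vh$. The triple is minimal if $\mathcal K_\ell=\overline{\operatorname{span}}\{\pi_1(a_1)\cdots\pi_m(a_m)Vh:a_p\in\mathcal A,\ h\in\mathcal H_\ell\}$ for every $\ell\in\Omega$. *)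

theory Defs
  imports "HOL-Analysis.Analysis"
begin

class complex_vector = ab_group_add +
  fixes scaleC :: "complex \<Rightarrow> 'a \<Rightarrow> 'a" (infixr \<open>*\<^sub>C\<close> 75)
  assumes scaleC_add_right: "c *\<^sub>C (x + y) = c *\<^sub>C x + c *\<^sub>C y"
    and scaleC_add_left: "(c + d) *\<^sub>C x = c *\<^sub>C x + d *\<^sub>C x"
    and scaleC_scaleC: "c *\<^sub>C (d *\<^sub>C x) = (c * d) *\<^sub>C x"
    and scaleC_one: "1 *\<^sub>C x = x"

text \<open>Complex inner product spaces; the inner product is linear in the first argument.\<close>
class complex_inner = complex_vector + real_normed_vector +
  fixes cinner :: "'a \<Rightarrow> 'a \<Rightarrow> complex"
  assumes scaleR_scaleC: "scaleR r x = complex_of_real r *\<^sub>C x"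
    and cinner_add_left: "cinner (x + y) z = cinner x z + cinner y z"
    and cinner_scaleC_left: "cinner (c *\<^sub>C x) y = c * cinner x y"
    and cinner_commute: "cinner y x = cnj (cinner x y)"
    and cinner_nonneg: "0 \<le> Re (cinner x x)"
    and cinner_eq_zero_iff: "cinner x x = 0 \<longleftrightarrow> x = 0"
    and norm_eq_sqrt_cinner: "norm x = sqrt (Re (cinner x x))"

class chilbert_space = complex_inner + complete_space

text \<open>Complex *-algebras with unit (the unit may equal zero).\<close>
class star_algebra = complex_vector + ring + monoid_mult +
  fixes star_op :: "'a \<Rightarrow> 'a"
  assumes scaleC_mult_left: "(c *\<^sub>C x) * y = c *\<^sub>C (x * y)"
    and scaleC_mult_right: "x * (c *\<^sub>C y) = c *\<^sub>C (x * y)"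
    and star_star: "star_op (star_op x) = x"
    and star_add: "star_op (x + y) = star_op x + star_op y"
    and star_scaleC: "star_op (c *\<^sub>C x) = cnj c *\<^sub>C star_op x"
    and star_mult: "star_op (x * y) = star_op y * star_op x"

text \<open>A unital locally C*-algebra: complete (every proper Cauchy filter converges), Hausdorff,
  w.r.t. an upward filtered family of C*-seminorms p indexed by the type 'i (= Lambda).\<close>
definition C_seminorm :: "('a::star_algebra \<Rightarrow> real) \<Rightarrow> bool" where
  "C_seminorm q \<longleftrightarrow> (\<forall>a. 0 \<le> q a) \<and> (\<forall>a b. q (a + b) \<le> q a + q b)
     \<and> (\<forall>c a. q (c *\<^sub>C a) = cmod c * q a) \<and> (\<forall>a b. q (a * b) \<le> q a * q b)
     \<and> (\<forall>a. q (star_op a * a) = (q a)\<^sup>2)"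

definition locally_C_star_algebra :: "('i \<Rightarrow> 'a::star_algebra \<Rightarrow> real) \<Rightarrow> bool" where
  "locally_C_star_algebra p \<longleftrightarrow>
     (\<forall>\<alpha>. C_seminorm (p \<alpha>))
   \<and> (\<forall>\<alpha> \<beta>. \<exists>\<gamma>. \<forall>a. p \<alpha> a \<le> p \<gamma> a \<and> p \<beta> a \<le> p \<gamma> a)
   \<and> (\<forall>a. (\<forall>\<alpha>. p \<alpha> a = 0) \<longrightarrow> a = 0)
   \<and> (\<forall>F. F \<noteq> bot \<and> (\<forall>\<alpha>. \<forall>e>0. \<exists>S. eventually (\<lambda>x. x \<in> S) F \<and> (\<forall>x\<in>S. \<forall>y\<in>S. p \<alpha> (x - y) < e))
          \<longrightarrow> (\<exists>x. \<forall>\<alpha>. \<forall>e>0. eventually (\<lambda>y. p \<alpha> (y - x) < e) F))"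

text \<open>Matrices over A are functions nat => nat => 'a, only entries with indices < n matter.\<close>
definition mstar :: "nat \<Rightarrow> (nat \<Rightarrow> nat \<Rightarrow> 'a::star_algebra) \<Rightarrow> nat \<Rightarrow> nat \<Rightarrow> 'a" where
  "mstar n X = (\<lambda>i j. star_op (X j i))"

definition mmult :: "nat \<Rightarrow> (nat \<Rightarrow> nat \<Rightarrow> 'a::star_algebra) \<Rightarrow> (nat \<Rightarrow> nat \<Rightarrow> 'a) \<Rightarrow> nat \<Rightarrow> nat \<Rightarrow> 'a" where
  "mmult n X Y = (\<lambda>i j. \<Sum>r<n. X i r * Y r j)"

text \<open>p^n_alpha(X): the C*-norm of the image of X in M_n(A_alpha), computed as the norm of X acting
  on the Hilbert module (A_alpha)^n: sup of p_alpha(b^* X c) over unit vectors b, c.\<close>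
definition mseminorm :: "('i \<Rightarrow> 'a::star_algebra \<Rightarrow> real) \<Rightarrow> 'i \<Rightarrow> nat \<Rightarrow> (nat \<Rightarrow> nat \<Rightarrow> 'a) \<Rightarrow> real" where
  "mseminorm p \<alpha> n X = Sup {p \<alpha> (\<Sum>i<n. \<Sum>j<n. star_op (b i) * X i j * c j) | b c.
       p \<alpha> (\<Sum>i<n. star_op (b i) * b i) \<le> 1 \<and> p \<alpha> (\<Sum>j<n. star_op (c j) * c j) \<le> 1}"

definition meq :: "('i \<Rightarrow> 'a::star_algebra \<Rightarrow> real) \<Rightarrow> 'i \<Rightarrow> nat \<Rightarrow> (nat \<Rightarrow> nat \<Rightarrow> 'a) \<Rightarrow> (nat \<Rightarrow> nat \<Rightarrow> 'a) \<Rightarrow> bool" where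
  "meq p \<alpha> n X Y \<longleftrightarrow> mseminorm p \<alpha> n (\<lambda>i j. X i j - Y i j) = 0"

text \<open>X >=_alpha 0: the image of X in M_n(A_alpha) is positive, i.e. of the form B^* B.\<close>
definition mpos :: "('i \<Rightarrow> 'a::star_algebra \<Rightarrow> real) \<Rightarrow> 'i \<Rightarrow> nat \<Rightarrow> (nat \<Rightarrow> nat \<Rightarrow> 'a) \<Rightarrow> bool" where
  "mpos p \<alpha> n X \<longleftrightarrow> (\<exists>B. meq p \<alpha> n X (mmult n (mstar n B) B))"

definition csubspace :: "'h::complex_vector set \<Rightarrow> bool" where
  "csubspace S \<longleftrightarrow> 0 \<in> S \<and> (\<forall>x\<in>S. \<forall>y\<in>S. x + y \<in> S) \<and> (\<forall>c. \<forall>x\<in>S. c *\<^sub>C x \<in> S)"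

definition closed_csubspace :: "'h::complex_inner set \<Rightarrow> bool" where
  "closed_csubspace S \<longleftrightarrow> csubspace S \<and> closed S"

definition cspan :: "'h::complex_vector set \<Rightarrow> 'h set" where
  "cspan X = \<Inter>{S. csubspace S \<and> X \<subseteq> S}"

definition cproj :: "'h::complex_inner set \<Rightarrow> 'h \<Rightarrow> 'h" where
  "cproj S x = (THE y. y \<in> S \<and> (\<forall>z\<in>S. cinner (x - y) z = 0))"

definition cadj :: "('h::complex_inner \<Rightarrow> 'k::complex_inner) \<Rightarrow> 'k \<Rightarrow> 'h" where
  "cadj V y = (THE x. \<forall>h. cinner (V h) y = cinner h x)"

text \<open>Quantized domain {Ht; E; union of E}, where the Hilbert space Ht is a closed subspace of the
  ambient type (for the fixed domain Ht = UNIV), indexed by the directed set 'l.\<close>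
definition qdomain :: "'h::chilbert_space set \<Rightarrow> ('l::preorder \<Rightarrow> 'h set) \<Rightarrow> bool" where
  "qdomain Ht E \<longleftrightarrow> closed_csubspace Ht \<and> (\<forall>l. closed_csubspace (E l) \<and> E l \<subseteq> Ht)
     \<and> (\<forall>l l'. l \<le> l' \<longrightarrow> E l \<subseteq> E l') \<and> closure (\<Union>(range E)) = Ht"

definition qdom :: "('l \<Rightarrow> 'h set) \<Rightarrow> 'h set" where
  "qdom E = \<Union>(range E)"

text \<open>Membership of T : D -> D in C*_E(D) (T represented by a total function; only its values on D matter).\<close>
definition in_CE :: "'h::chilbert_space set \<Rightarrow> ('l \<Rightarrow> 'h set) \<Rightarrow> ('h \<Rightarrow> 'h) \<Rightarrow> bool" where
  "in_CE Ht E T \<longleftrightarrow>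
     (\<forall>x\<in>qdom E. T x \<in> qdom E)
   \<and> (\<forall>x\<in>qdom E. \<forall>y\<in>qdom E. T (x + y) = T x + T y)
   \<and> (\<forall>c. \<forall>x\<in>qdom E. T (c *\<^sub>C x) = c *\<^sub>C T x)
   \<and> (\<forall>l. \<forall>x\<in>Ht. T (cproj (E l) x) = cproj (E l) (T (cproj (E l) x)))
   \<and> (\<forall>l. \<forall>x\<in>qdom E. cproj (E l) (T x) = T (cproj (E l) x))
   \<and> (\<forall>l. \<exists>C. \<forall>x\<in>E l. norm (T x) \<le> C * norm x)"

text \<open>S = T^* in C*_E(D), i.e. S is the restriction to D of the Hilbert space adjoint of T.\<close>
definition op_star_eq :: "'h::complex_inner set \<Rightarrow> ('h \<Rightarrow> 'h) \<Rightarrow> ('h \<Rightarrow> 'h) \<Rightarrow> bool" where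
  "op_star_eq D T S \<longleftrightarrow> (\<forall>x\<in>D. \<forall>y\<in>D. cinner (T x) y = cinner x (S y))"

definition vnorm :: "nat \<Rightarrow> (nat \<Rightarrow> 'h::complex_inner) \<Rightarrow> real" where
  "vnorm n h = sqrt (\<Sum>i<n. (norm (h i))\<^sup>2)"

definition matapp :: "nat \<Rightarrow> (nat \<Rightarrow> nat \<Rightarrow> 'h \<Rightarrow> 'h::complex_inner) \<Rightarrow> (nat \<Rightarrow> 'h) \<Rightarrow> nat \<Rightarrow> 'h" where
  "matapp n Y h = (\<lambda>i. \<Sum>j<n. Y i j (h j))"

definition mat_bound :: "('l \<Rightarrow> 'h::complex_inner set) \<Rightarrow> 'l \<Rightarrow> nat \<Rightarrow> (nat \<Rightarrow> nat \<Rightarrow> 'h \<Rightarrow> 'h) \<Rightarrow> real \<Rightarrow> bool" where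
  "mat_bound E l n Y c \<longleftrightarrow> (\<forall>h. (\<forall>i<n. h i \<in> E l) \<longrightarrow> vnorm n (matapp n Y h) \<le> c * vnorm n h)"

definition mat_pos :: "('l \<Rightarrow> 'h::complex_inner set) \<Rightarrow> 'l \<Rightarrow> nat \<Rightarrow> (nat \<Rightarrow> nat \<Rightarrow> 'h \<Rightarrow> 'h) \<Rightarrow> bool" where
  "mat_pos E l n Y \<longleftrightarrow> (\<forall>h. (\<forall>i<n. h i \<in> E l) \<longrightarrow>
     Im (\<Sum>i<n. cinner (matapp n Y h i) (h i)) = 0 \<and> 0 \<le> Re (\<Sum>i<n. cinner (matapp n Y h i) (h i)))"

definition mat_zero :: "('l \<Rightarrow> 'h::complex_inner set) \<Rightarrow> 'l \<Rightarrow> nat \<Rightarrow> (nat \<Rightarrow> nat \<Rightarrow> 'h \<Rightarrow> 'h) \<Rightarrow> bool" where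
  "mat_zero E l n Y \<longleftrightarrow> (\<forall>h. (\<forall>i<n. h i \<in> E l) \<longrightarrow> (\<forall>i<n. matapp n Y h i = 0))"

definition paths :: "nat \<Rightarrow> nat \<Rightarrow> nat \<Rightarrow> nat \<Rightarrow> (nat \<Rightarrow> nat) set" where
  "paths k n i j = {r. r 0 = i \<and> r k = j \<and> (\<forall>t. 0 < t \<and> t < k \<longrightarrow> r t < n) \<and> (\<forall>t>k. r t = 0)}"

text \<open>Amplification phi_n; a k-linear map is a function on lists of length k (0-based positions).\<close>
definition amp :: "('a list \<Rightarrow> 'h \<Rightarrow> 'h::complex_inner) \<Rightarrow> nat \<Rightarrow> nat \<Rightarrow> (nat \<Rightarrow> nat \<Rightarrow> 'a) list
                   \<Rightarrow> nat \<Rightarrow> nat \<Rightarrow> 'h \<Rightarrow> 'h" where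
  "amp \<phi> k n Xs = (\<lambda>i j h. \<Sum>r\<in>paths k n i j. \<phi> (map (\<lambda>t. (Xs ! t) (r t) (r (Suc t))) [0..<k]) h)"

definition multilinear_CE :: "('l \<Rightarrow> 'h::chilbert_space set) \<Rightarrow> nat \<Rightarrow> ('a::star_algebra list \<Rightarrow> 'h \<Rightarrow> 'h) \<Rightarrow> bool" where
  "multilinear_CE E k \<phi> \<longleftrightarrow> (\<forall>as. length as = k \<longrightarrow> in_CE UNIV E (\<phi> as)
     \<and> (\<forall>i<k. \<forall>a b c. \<forall>h\<in>qdom E.
          \<phi> (as[i := a + b]) h = \<phi> (as[i := a]) h + \<phi> (as[i := b]) h
        \<and> \<phi> (as[i := c *\<^sub>C a]) h = c *\<^sub>C \<phi> (as[i := a]) h))"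

definition symmetric_map :: "('l \<Rightarrow> 'h::chilbert_space set) \<Rightarrow> nat \<Rightarrow> ('a::star_algebra list \<Rightarrow> 'h \<Rightarrow> 'h) \<Rightarrow> bool" where
  "symmetric_map E k \<phi> \<longleftrightarrow> (\<forall>as. length as = k \<longrightarrow> op_star_eq (qdom E) (\<phi> as) (\<phi> (rev (map star_op as))))"

text \<open>Invariance: positions i < k div 2 (0-based) are multiplied on the right by c_i, and the mirror
  positions k-1-i on the left by c_i; this is both cases k = 2m-1 and k = 2m of the paper.\<close>
definition invariant_map :: "('l \<Rightarrow> 'h::chilbert_space set) \<Rightarrow> nat \<Rightarrow> ('a::star_algebra list \<Rightarrow> 'h \<Rightarrow> 'h) \<Rightarrow> bool" where
  "invariant_map E k \<phi> \<longleftrightarrow> (\<forall>as cs. length as = k \<longrightarrow> (\<forall>h\<in>qdom E.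
     \<phi> (map (\<lambda>j. if j < k div 2 then (as ! j) * cs j else as ! j) [0..<k]) h
   = \<phi> (map (\<lambda>j. if k - k div 2 \<le> j then cs (k - 1 - j) * (as ! j) else as ! j) [0..<k]) h))"

definition local_cc :: "('i \<Rightarrow> 'a::star_algebra \<Rightarrow> real) \<Rightarrow> ('l \<Rightarrow> 'h::chilbert_space set) \<Rightarrow> nat
                        \<Rightarrow> ('a list \<Rightarrow> 'h \<Rightarrow> 'h) \<Rightarrow> bool" where
  "local_cc p E k \<phi> \<longleftrightarrow> (\<forall>l. \<exists>\<alpha>. \<forall>n Xs. length Xs = k \<longrightarrow>
      mat_bound E l n (amp \<phi> k n Xs) (Max (set (map (mseminorm p \<alpha> n) Xs))))"

definition local_cp :: "('i \<Rightarrow> 'a::star_algebra \<Rightarrow> real) \<Rightarrow> ('l \<Rightarrow> 'h::chilbert_space set) \<Rightarrow> nat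
                        \<Rightarrow> ('a list \<Rightarrow> 'h \<Rightarrow> 'h) \<Rightarrow> bool" where
  "local_cp p E k \<phi> \<longleftrightarrow> (\<forall>l. \<exists>\<alpha>. \<forall>n Xs. length Xs = k \<longrightarrow>
      (((\<forall>q\<in>{1..(k+1) div 2}. meq p \<alpha> n (mstar n (Xs ! (q - 1))) (Xs ! (k - q)))
         \<and> (odd k \<longrightarrow> mpos p \<alpha> n (Xs ! ((k+1) div 2 - 1))))
        \<longrightarrow> mat_pos E l n (amp \<phi> k n Xs))
    \<and> ((\<exists>i<k. meq p \<alpha> n (Xs ! i) (\<lambda>_ _. 0)) \<longrightarrow> mat_zero E l n (amp \<phi> k n Xs)))"

definition ICPCC :: "('i \<Rightarrow> 'a::star_algebra \<Rightarrow> real) \<Rightarrow> ('l \<Rightarrow> 'h::chilbert_space set) \<Rightarrow> nat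
                     \<Rightarrow> ('a list \<Rightarrow> 'h \<Rightarrow> 'h) \<Rightarrow> bool" where
  "ICPCC p E k \<phi> \<longleftrightarrow> multilinear_CE E k \<phi> \<and> symmetric_map E k \<phi> \<and> invariant_map E k \<phi>
     \<and> local_cc p E k \<phi> \<and> local_cp p E k \<phi>"

primrec pi_prod :: "(nat \<Rightarrow> 'a \<Rightarrow> 'k \<Rightarrow> 'k) \<Rightarrow> nat \<Rightarrow> (nat \<Rightarrow> 'a) \<Rightarrow> 'k \<Rightarrow> 'k" where
  "pi_prod \<pi> 0 x v = v"
| "pi_prod \<pi> (Suc j) x v = pi_prod \<pi> j x (\<pi> (Suc j) (x (Suc j)) v)"

text \<open>The arguments of pi_1, ..., pi_m in the Stinespring formula (as is 0-based, q is 1-based).\<close>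
definition stine_args :: "nat \<Rightarrow> 'a::star_algebra list \<Rightarrow> nat \<Rightarrow> 'a" where
  "stine_args k as = (let m = (k + 1) div 2 in (\<lambda>q.
     if odd k then (if q = 1 then as ! (m - 1) else as ! (m - q) * as ! (m + q - 2))
     else as ! (m - q) * as ! (m + q - 1)))"

definition local_contractive_hom ::
  "('i \<Rightarrow> 'a::star_algebra \<Rightarrow> real) \<Rightarrow> 'k::chilbert_space set \<Rightarrow> ('l \<Rightarrow> 'k set) \<Rightarrow> ('a \<Rightarrow> 'k \<Rightarrow> 'k) \<Rightarrow> bool" where
  "local_contractive_hom p Kt F \<pi> \<longleftrightarrow>
     (\<forall>a. in_CE Kt F (\<pi> a))
   \<and> (\<forall>a b. \<forall>x\<in>qdom F. \<pi> (a + b) x = \<pi> a x + \<pi> b x)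
   \<and> (\<forall>c a. \<forall>x\<in>qdom F. \<pi> (c *\<^sub>C a) x = c *\<^sub>C \<pi> a x)
   \<and> (\<forall>a b. \<forall>x\<in>qdom F. \<pi> (a * b) x = \<pi> a (\<pi> b x))
   \<and> (\<forall>x\<in>qdom F. \<pi> 1 x = x)
   \<and> (\<forall>a. op_star_eq (qdom F) (\<pi> a) (\<pi> (star_op a)))
   \<and> (\<forall>l. \<exists>\<alpha>. \<forall>a. \<forall>x\<in>F l. norm (\<pi> a x) \<le> p \<alpha> a * norm x)"

definition stinespring_triple ::
  "('i \<Rightarrow> 'a::star_algebra \<Rightarrow> real) \<Rightarrow> ('l::preorder \<Rightarrow> 'h::chilbert_space set) \<Rightarrow> nat \<Rightarrow> ('a list \<Rightarrow> 'h \<Rightarrow> 'h)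
   \<Rightarrow> (nat \<Rightarrow> 'a \<Rightarrow> 'k \<Rightarrow> 'k) \<Rightarrow> ('h \<Rightarrow> 'k) \<Rightarrow> 'k::chilbert_space set \<Rightarrow> ('l \<Rightarrow> 'k set) \<Rightarrow> bool" where
  "stinespring_triple p E k \<phi> \<pi> V Kt F \<longleftrightarrow> (let m = (k + 1) div 2 in
     qdomain Kt F
   \<and> (\<forall>x y. V (x + y) = V x + V y) \<and> (\<forall>c x. V (c *\<^sub>C x) = c *\<^sub>C V x)
   \<and> (\<forall>h. norm (V h) \<le> norm h) \<and> (\<forall>h. V h \<in> Kt) \<and> (\<forall>l. V ` E l \<subseteq> F l)
   \<and> (\<forall>q\<in>{1..m}. local_contractive_hom p Kt F (\<pi> q))
   \<and> (\<forall>q\<in>{1..m}. \<forall>q'\<in>{1..m}. q \<noteq> q' \<longrightarrow>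
        (\<forall>a b. \<forall>x\<in>qdom F. \<pi> q a (\<pi> q' b x) = \<pi> q' b (\<pi> q a x)))
   \<and> (\<forall>as. length as = k \<longrightarrow> (\<forall>h\<in>qdom E. \<phi> as h = cadj V (pi_prod \<pi> m (stine_args k as) (V h)))))"

definition minimal_triple ::
  "('l \<Rightarrow> 'h::chilbert_space set) \<Rightarrow> nat \<Rightarrow> (nat \<Rightarrow> 'a \<Rightarrow> 'k \<Rightarrow> 'k) \<Rightarrow> ('h \<Rightarrow> 'k) \<Rightarrow> ('l \<Rightarrow> 'k::chilbert_space set) \<Rightarrow> bool" where
  "minimal_triple E k \<pi> V F \<longleftrightarrow> (\<forall>l. F l = closure (cspan
      {pi_prod \<pi> ((k + 1) div 2) x (V h) | x h. h \<in> E l}))"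

end

theory Submission imports Defs begin

context complex_vector begin
lemma scaleC_zero_left[simp]: "0 *\<^sub>C x = 0"
proof -
  have "0 *\<^sub>C x = (0 + 0) *\<^sub>C x" by simp
  also have "\<dots> = 0 *\<^sub>C x + 0 *\<^sub>C x" by (rule scaleC_add_left)
  finally show ?thesis by simp
qed
lemma scaleC_zero_right[simp]: "c *\<^sub>C 0 = 0"
proof -
  have "c *\<^sub>C 0 = c *\<^sub>C (0 + 0)" by simp
  also have "\<dots> = c *\<^sub>C 0 + c *\<^sub>C 0" by (rule scaleC_add_right)
  finally show ?thesis by simp
qed
lemma scaleC_minus_right: "c *\<^sub>C (- x) = - (c *\<^sub>C x)"
proof -
  have "c *\<^sub>C (- x) + c *\<^sub>C x = 0" by (simp flip: scaleC_add_right)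
  then show ?thesis by (simp add: eq_neg_iff_add_eq_0)
qed
lemma scaleC_diff_right: "c *\<^sub>C (x - y) = c *\<^sub>C x - c *\<^sub>C y"
  by (simp only: diff_conv_add_uminus scaleC_add_right scaleC_minus_right)
lemma scaleC_minus1: "(-1) *\<^sub>C x = - x"
proof -
  have "(-1) *\<^sub>C x + x = 0"
    using scaleC_add_left[of "-1" 1 x] by (simp add: scaleC_one)
  then show ?thesis by (simp add: eq_neg_iff_add_eq_0)
qed
end

lemma csubspace_diff: "csubspace S \<Longrightarrow> x \<in> S \<Longrightarrow> y \<in> S \<Longrightarrow> x - y \<in> S"
proof -
  assume a: "csubspace S" "x \<in> S" "y \<in> S"
  then have "x + (-1) *\<^sub>C y \<in> S" unfolding csubspace_def by blast
  then show ?thesis by (simp add: scaleC_minus1)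
qed
lemma csubspace_scaleR: "csubspace (S::'h::complex_inner set) \<Longrightarrow> x \<in> S \<Longrightarrow> r *\<^sub>R x \<in> S"
  unfolding csubspace_def by (simp add: scaleR_scaleC)
lemma csubspace_add: "csubspace S \<Longrightarrow> x \<in> S \<Longrightarrow> y \<in> S \<Longrightarrow> x + y \<in> S"
  unfolding csubspace_def by blast
lemma csubspace_scaleC: "csubspace S \<Longrightarrow> x \<in> S \<Longrightarrow> c *\<^sub>C x \<in> S"
  unfolding csubspace_def by blast
lemma csubspace_0: "csubspace S \<Longrightarrow> 0 \<in> S"
  unfolding csubspace_def by blast

context complex_inner begin
lemma cinner_zero_left[simp]: "cinner 0 y = 0"
  using cinner_add_left[of 0 0 y] by simp
lemma cinner_minus_left: "cinner (- x) y = - (cinner x y)"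
  using cinner_scaleC_left[of "-1" x y] by (simp add: scaleC_minus1)
lemma cinner_diff_left: "cinner (x - y) z = cinner x z - cinner y z"
  using cinner_add_left[of x "-y" z] cinner_minus_left[of y z] by simp
lemma cinner_commute': "cinner x y = cnj (cinner y x)"
  by (rule cinner_commute)
lemma cinner_add_right: "cinner x (y + z) = cinner x y + cinner x z"
  using cinner_commute'[of x "y+z"] cinner_commute'[of x y, symmetric] cinner_commute'[of x z, symmetric] by (simp add: cinner_add_left)
lemma cinner_diff_right: "cinner x (y - z) = cinner x y - cinner x z"
  using cinner_commute'[of x "y-z"] cinner_commute'[of x y, symmetric] cinner_commute'[of x z, symmetric] by (simp add: cinner_diff_left)
lemma cinner_scaleC_right: "cinner x (c *\<^sub>C y) = cnj c * cinner x y"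
  using cinner_commute'[of x "c *\<^sub>C y"] cinner_commute'[of x y, symmetric] by (simp add: cinner_scaleC_left)
lemma cinner_self_real: "cinner x x = complex_of_real (Re (cinner x x))"
proof -
  have h: "cinner x x = cnj (cinner x x)" by (rule cinner_commute)
  have "Im (cinner x x) = - Im (cinner x x)" using arg_cong[OF h, of Im] by simp
  then have "Im (cinner x x) = 0" by simp
  then show ?thesis by (simp add: complex_eq_iff)
qed
lemma norm_sq_cinner: "(norm x)^2 = Re (cinner x x)"
  by (simp add: norm_eq_sqrt_cinner cinner_nonneg)
lemma norm_scaleC: "norm (c *\<^sub>C x) = cmod c * norm x"
proof -
  have r: "cinner x x = complex_of_real (Re (cinner x x))" by (rule cinner_self_real)
  have "cinner (c *\<^sub>C x) (c *\<^sub>C x) = (c * cnj c) * cinner x x"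
    by (simp add: cinner_scaleC_left cinner_scaleC_right)
  also have "\<dots> = complex_of_real ((cmod c)^2) * complex_of_real (Re (cinner x x))"
    by (subst complex_norm_square, subst r, rule refl)
  also have "\<dots> = complex_of_real ((cmod c)^2 * Re (cinner x x))"
    by (simp only: of_real_mult)
  finally have "Re (cinner (c *\<^sub>C x) (c *\<^sub>C x)) = (cmod c)^2 * Re (cinner x x)"
    by (simp only: Re_complex_of_real)
  then have "(norm (c *\<^sub>C x))^2 = (cmod c * norm x)^2"
    by (simp only: norm_sq_cinner power_mult_distrib)
  then show ?thesis by (simp add: power2_eq_iff_nonneg)
qed

definition rin :: "'a \<Rightarrow> 'a \<Rightarrow> real" where "rin x y = Re (cinner x y)"
lemma rin_sym: "rin x y = rin y x"
  unfolding rin_def using cinner_commute'[of x y] by simp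
lemma rin_add_left: "rin (x + y) z = rin x z + rin y z"
  unfolding rin_def by (simp add: cinner_add_left)
lemma rin_add_right: "rin z (x + y) = rin z x + rin z y"
  unfolding rin_def by (simp add: cinner_add_right)
lemma rin_diff_left: "rin (x - y) z = rin x z - rin y z"
  unfolding rin_def by (simp add: cinner_diff_left)
lemma rin_diff_right: "rin z (x - y) = rin z x - rin z y"
  unfolding rin_def by (simp add: cinner_diff_right)
lemma rin_scaleR_left: "rin (t *\<^sub>R x) z = t * rin x z"
  unfolding rin_def by (simp add: scaleR_scaleC cinner_scaleC_left)
lemma rin_scaleR_right: "rin z (t *\<^sub>R x) = t * rin z x"
  using rin_scaleR_left[of t x z] rin_sym[of z "t *\<^sub>R x"] rin_sym[of z x] by simp
lemma norm_sq_rin: "(norm x)^2 = rin x x"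
  unfolding rin_def by (rule norm_sq_cinner)
lemma rin_nonneg: "0 \<le> rin x x"
proof -
  have "0 \<le> (norm x)^2" by simp
  then show ?thesis by (simp only: norm_sq_rin)
qed
end


lemma quad_zero:
  fixes a b :: real
  assumes b: "0 \<le> b" and h: "\<And>t. 0 \<le> t^2 * b - 2 * t * a"
  shows "a = 0"
proof -
  define t where "t = a / (b + 1)"
  have "0 \<le> t^2 * b - 2 * t * a" by (rule h)
  then have "0 \<le> (b+1)^2 * (t^2 * b - 2 * t * a)" using b by simp
  also have "(b+1)^2 * (t^2 * b - 2 * t * a) = (t*(b+1))^2 * b - 2*(t*(b+1))*a*(b+1)"
    by (simp add: power2_eq_square algebra_simps)
  also have "t * (b+1) = a" unfolding t_def using b by simp
  also have "a^2 * b - 2 * a * a * (b + 1) = a^2 * b - 2 * a^2 * (b + 1)" by (simp add: power2_eq_square)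
  finally have "a^2 * (b + 2) \<le> 0" by (simp add: algebra_simps)
  moreover have "0 < b + 2" using b by simp
  ultimately have "a^2 \<le> 0" by (simp add: mult_le_0_iff)
  then show ?thesis by simp
qed

lemma proj_exists:
  fixes x :: "'h::chilbert_space"
  assumes S: "closed_csubspace S"
  shows "\<exists>y\<in>S. \<forall>z\<in>S. cinner (x - y) z = 0"
proof -
  have sub: "csubspace S" and cl: "closed S" using S unfolding closed_csubspace_def by auto
  have ne: "0 \<in> S" using csubspace_0[OF sub] .
  define D where "D = (\<lambda>s. norm (x - s)) ` S"
  define d where "d = Inf D"
  have bdd: "bdd_below D" unfolding D_def by (rule bdd_belowI[of _ 0]) auto
  have Dne: "D \<noteq> {}" using ne unfolding D_def by auto
  have dle: "d \<le> norm (x - s)" if "s \<in> S" for s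
    unfolding d_def using bdd that by (auto intro!: cInf_lower simp: D_def)
  have d0: "0 \<le> d" unfolding d_def using Dne by (auto intro!: cInf_greatest simp: D_def)
  have ex: "\<exists>s\<in>S. (norm (x - s))^2 < d^2 + inverse (real (Suc n))" for n
  proof -
    let ?a = "d^2 + inverse (real (Suc n))"
    have a0: "0 \<le> ?a" by simp
    have "d < sqrt ?a" by (rule real_less_rsqrt) simp
    then obtain t where "t \<in> D" "t < sqrt ?a" using cInf_lessD[OF Dne] unfolding d_def by blast
    then obtain s where s: "s \<in> S" "norm (x - s) < sqrt ?a" unfolding D_def by auto
    then have "(norm (x - s))^2 < (sqrt ?a)^2" by (intro power_strict_mono) auto
    then have "(norm (x - s))^2 < ?a" using a0 by simp
    then show ?thesis using s by blast
  qed
  then have "\<forall>n. \<exists>s. s \<in> S \<and> (norm (x - s))^2 < d^2 + inverse (real (Suc n))" by blast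
  then obtain s where s: "\<And>n. s n \<in> S" "\<And>n. (norm (x - s n))^2 < d^2 + inverse (real (Suc n))"
    by metis
  have para: "(norm (s m - s n))^2 \<le> 2 * inverse (real (Suc m)) + 2 * inverse (real (Suc n))" for m n
  proof -
    define a where "a = x - s m"
    define b where "b = x - s n"
    define u where "u = (1/2) *\<^sub>R (s m + s n)"
    have uS: "u \<in> S" unfolding u_def using s(1) sub by (intro csubspace_scaleR csubspace_add) auto
    have hx: "(1/2) *\<^sub>R x + (1/2) *\<^sub>R x = x" by (simp flip: scaleR_add_left)
    have xu: "x - u = (1/2) *\<^sub>R (a + b)" unfolding u_def a_def b_def using hx by (simp add: algebra_simps)
    have smn: "s m - s n = b - a" unfolding a_def b_def by simp
    have "d^2 \<le> (norm (x - u))^2" using dle[OF uS] d0 by (simp add: power_mono)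
    also have "(norm (x - u))^2 = (1/4) * (norm (a + b))^2"
      unfolding xu by (simp add: power2_eq_square)
    finally have h1: "4 * d^2 \<le> (norm (a + b))^2" by simp
    have pl: "(norm (a + b))^2 + (norm (b - a))^2 = 2 * (norm a)^2 + 2 * (norm b)^2"
      unfolding norm_sq_rin using rin_sym[of a b]
      by (simp add: rin_add_left rin_add_right rin_diff_left rin_diff_right)
    have "(norm a)^2 < d^2 + inverse (real (Suc m))" unfolding a_def by (rule s(2))
    moreover have "(norm b)^2 < d^2 + inverse (real (Suc n))" unfolding b_def by (rule s(2))
    ultimately show ?thesis using h1 pl smn by simp
  qed
  have cau: "Cauchy s"
  proof (rule CauchyI)
    fix e :: real assume e: "0 < e"
    then have "0 < e^2 / 4" by simp
    then obtain M where M: "inverse (real (Suc M)) < e^2 / 4" using reals_Archimedean by blast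
    have "\<forall>m\<ge>M. \<forall>n\<ge>M. norm (s m - s n) < e"
    proof (intro allI impI)
      fix m n assume mn: "M \<le> m" "M \<le> n"
      have im: "inverse (real (Suc m)) \<le> inverse (real (Suc M))" using mn by (simp add: le_imp_inverse_le)
      have iN: "inverse (real (Suc n)) \<le> inverse (real (Suc M))" using mn by (simp add: le_imp_inverse_le)
      have "(norm (s m - s n))^2 < e^2" using para[of m n] im iN M by linarith
      then show "norm (s m - s n) < e" by (rule power2_less_imp_less) (use e in simp)
    qed
    then show "\<exists>M. \<forall>m\<ge>M. \<forall>n\<ge>M. norm (s m - s n) < e" by blast
  qed
  then obtain y where lim: "s \<longlonglongrightarrow> y" using Cauchy_convergent_iff convergent_def by blast
  have yS: "y \<in> S" using closed_sequentially[OF cl s(1) lim] .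
  have l1: "(\<lambda>n. (norm (x - s n))^2) \<longlonglongrightarrow> (norm (x - y))^2"
    by (intro tendsto_intros lim)
  have l2: "(\<lambda>n. d^2 + inverse (real (Suc n))) \<longlonglongrightarrow> d^2 + 0"
    by (intro tendsto_intros LIMSEQ_inverse_real_of_nat)
  have "(norm (x - y))^2 \<le> d^2 + 0"
    by (rule LIMSEQ_le[OF l1 l2]) (use s(2) less_imp_le in blast)
  then have minim: "(norm (x - y))^2 \<le> (norm (x - z))^2" if "z \<in> S" for z
    using dle[OF that] d0 by (smt (verit) power_mono)
  define w where "w = x - y"
  have re0: "rin w z = 0" if zS: "z \<in> S" for z
  proof (rule quad_zero[OF rin_nonneg])
    fix t :: real
    have "y + t *\<^sub>R z \<in> S" using zS yS sub by (intro csubspace_add csubspace_scaleR) auto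
    from minim[OF this] have "(norm w)^2 \<le> (norm (w - t *\<^sub>R z))^2"
      unfolding w_def by (simp add: algebra_simps)
    then show "0 \<le> t^2 * rin z z - 2 * t * rin w z"
      unfolding norm_sq_rin using rin_sym[of z w]
      by (simp add: rin_diff_left rin_diff_right rin_scaleR_left rin_scaleR_right power2_eq_square algebra_simps)
  qed
  have "\<forall>z\<in>S. cinner w z = 0"
  proof
    fix z assume zS: "z \<in> S"
    have "Re (cinner w z) = 0" using re0[OF zS] unfolding rin_def .
    moreover have "\<i> *\<^sub>C z \<in> S" using csubspace_scaleC[OF sub zS] .
    then have "Re (cinner w (\<i> *\<^sub>C z)) = 0" using re0 unfolding rin_def by blast
    then have "Im (cinner w z) = 0" by (simp add: cinner_scaleC_right)
    ultimately show "cinner w z = 0" by (simp add: complex_eq_iff)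
  qed
  then show ?thesis using yS unfolding w_def by blast
qed


lemma cproj_unique:
  fixes x :: "'h::chilbert_space"
  assumes S: "closed_csubspace S" and y: "y \<in> S" "\<forall>z\<in>S. cinner (x - y) z = 0"
  shows "cproj S x = y"
  unfolding cproj_def
proof (rule the_equality)
  show "y \<in> S \<and> (\<forall>z\<in>S. cinner (x - y) z = 0)" using y by blast
next
  fix y' assume y': "y' \<in> S \<and> (\<forall>z\<in>S. cinner (x - y') z = 0)"
  have sub: "csubspace S" using S unfolding closed_csubspace_def by blast
  have d: "y - y' \<in> S" using csubspace_diff[OF sub] y y' by blast
  have "cinner (x - y') (y - y') - cinner (x - y) (y - y') = 0" using y y' d by simp
  moreover have "cinner (x - y') (y - y') - cinner (x - y) (y - y') = cinner (y - y') (y - y')"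
    by (simp add: cinner_diff_left)
  ultimately have "cinner (y - y') (y - y') = 0" by simp
  then have "y - y' = 0" by (simp only: cinner_eq_zero_iff)
  then show "y' = y" by simp
qed

lemma cproj_in:
  fixes x :: "'h::chilbert_space"
  assumes S: "closed_csubspace S"
  shows "cproj S x \<in> S" "\<forall>z\<in>S. cinner (x - cproj S x) z = 0"
proof -
  obtain y where "y \<in> S" "\<forall>z\<in>S. cinner (x - y) z = 0" using proj_exists[OF S] by blast
  with cproj_unique[OF S this] show "cproj S x \<in> S" "\<forall>z\<in>S. cinner (x - cproj S x) z = 0" by auto
qed

lemma cproj_id:
  fixes x :: "'h::chilbert_space"
  assumes S: "closed_csubspace S" and x: "x \<in> S"
  shows "cproj S x = x"
  using cproj_unique[OF S x] by simp

lemma cspan_sub: "csubspace (cspan X)"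
  unfolding cspan_def csubspace_def by blast
lemma cspan_sup: "X \<subseteq> cspan X"
  unfolding cspan_def by blast
lemma cspan_least: "csubspace S \<Longrightarrow> X \<subseteq> S \<Longrightarrow> cspan X \<subseteq> S"
  unfolding cspan_def by blast

lemma bounded_linear_scaleC: "bounded_linear (\<lambda>x::'a::complex_inner. c *\<^sub>C x)"
proof (rule bounded_linear_intro[where K="cmod c"])
  fix x y :: 'a show "c *\<^sub>C (x + y) = c *\<^sub>C x + c *\<^sub>C y" by (rule scaleC_add_right)
next
  fix r and x :: 'a show "c *\<^sub>C (r *\<^sub>R x) = r *\<^sub>R (c *\<^sub>C x)"
    by (simp add: scaleR_scaleC scaleC_scaleC mult.commute)
next
  fix x :: 'a show "norm (c *\<^sub>C x) \<le> norm x * cmod c" by (simp add: norm_scaleC mult.commute)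
qed

lemma closure_csubspace:
  fixes S :: "'a::complex_inner set"
  assumes "csubspace S" shows "csubspace (closure S)"
  unfolding csubspace_def
proof (intro conjI ballI allI)
  show "0 \<in> closure S" using assms csubspace_0 closure_subset by blast
next
  fix x y assume "x \<in> closure S" "y \<in> closure S"
  then obtain f g where f: "\<And>n. f n \<in> S" "f \<longlonglongrightarrow> x" and g: "\<And>n. g n \<in> S" "g \<longlonglongrightarrow> y"
    unfolding closure_sequential by blast
  have "(\<lambda>n. f n + g n) \<longlonglongrightarrow> x + y" by (intro tendsto_add f g)
  moreover have "\<forall>n. f n + g n \<in> S" using f g assms csubspace_add by blast
  ultimately show "x + y \<in> closure S" unfolding closure_sequential
    by (intro exI[where x="\<lambda>n. f n + g n"]) simp
next
  fix c x assume "x \<in> closure S"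
  then obtain f where f: "\<And>n. f n \<in> S" "f \<longlonglongrightarrow> x"
    unfolding closure_sequential by blast
  have "(\<lambda>n. c *\<^sub>C f n) \<longlonglongrightarrow> c *\<^sub>C x"
    using bounded_linear.tendsto[OF bounded_linear_scaleC f(2)] .
  moreover have "\<forall>n. c *\<^sub>C f n \<in> S" using f assms csubspace_scaleC by blast
  ultimately show "c *\<^sub>C x \<in> closure S" unfolding closure_sequential
    by (intro exI[where x="\<lambda>n. c *\<^sub>C f n"]) simp
qed

lemma closure_invariant:
  fixes T :: "'a::real_normed_vector \<Rightarrow> 'b::real_normed_vector"
  assumes A: "closed A" and BA: "B \<subseteq> A" and TB: "\<forall>x\<in>B. T x \<in> C"
    and lin: "\<forall>x\<in>A. \<forall>y\<in>A. T (x - y) = T x - T y" and dA: "\<forall>x\<in>A. \<forall>y\<in>A. x - y \<in> A"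
    and bd: "\<forall>x\<in>A. norm (T x) \<le> c * norm x" and y: "y \<in> closure B"
  shows "T y \<in> closure C"
proof -
  obtain f where f: "\<And>n. f n \<in> B" "f \<longlonglongrightarrow> y" using y unfolding closure_sequential by blast
  have yA: "y \<in> A" using y BA A closure_minimal by blast
  have fA: "\<And>n. f n \<in> A" using f BA by blast
  have "(\<lambda>n. norm (f n - y)) \<longlonglongrightarrow> 0" using f(2) tendsto_norm_zero LIM_zero by blast
  then have g: "(\<lambda>n. c * norm (f n - y)) \<longlonglongrightarrow> 0" using tendsto_mult_right_zero by blast
  have "\<forall>n. norm (T (f n) - T y) \<le> c * norm (f n - y)"
    using lin bd fA yA dA by metis
  then have "(\<lambda>n. T (f n) - T y) \<longlonglongrightarrow> 0"
    by (intro Lim_null_comparison[OF _ g]) simp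
  then have "(\<lambda>n. T (f n)) \<longlonglongrightarrow> T y" by (rule LIM_zero_cancel)
  moreover have "\<forall>n. T (f n) \<in> C" using f TB by blast
  ultimately show ?thesis unfolding closure_sequential
    by (intro exI[where x="\<lambda>n. T (f n)"]) simp
qed


lemma pp_D:
  assumes pres: "\<forall>q\<in>{1..m}. \<forall>a. \<forall>x\<in>D. \<pi> q a x \<in> D"
  shows "j \<le> m \<Longrightarrow> v \<in> D \<Longrightarrow> pi_prod \<pi> j x v \<in> D"
proof (induction j arbitrary: v)
  case 0 then show ?case by simp
next
  case (Suc j)
  have "\<pi> (Suc j) (x (Suc j)) v \<in> D" using pres Suc.prems by auto
  then show ?case using Suc by simp
qed

lemma pp_cong: "(\<forall>i\<in>{1..j}. x i = y i) \<Longrightarrow> pi_prod \<pi> j x v = pi_prod \<pi> j y v"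
proof (induction j arbitrary: v)
  case 0 then show ?case by simp
next
  case (Suc j)
  then have "x (Suc j) = y (Suc j)" by auto
  moreover have "\<forall>i\<in>{1..j}. x i = y i" using Suc.prems by auto
  ultimately show ?case using Suc.IH by simp
qed

lemma pp_comm:
  assumes pres: "\<forall>q\<in>{1..m}. \<forall>a. \<forall>x\<in>D. \<pi> q a x \<in> D"
    and comm: "\<forall>q\<in>{1..m}. \<forall>q'\<in>{1..m}. q \<noteq> q' \<longrightarrow> (\<forall>a b. \<forall>x\<in>D. \<pi> q a (\<pi> q' b x) = \<pi> q' b (\<pi> q a x))"
    and q: "q \<le> m"
  shows "j < q \<Longrightarrow> v \<in> D \<Longrightarrow> \<pi> q a (pi_prod \<pi> j x v) = pi_prod \<pi> j x (\<pi> q a v)"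
proof (induction j arbitrary: v)
  case 0 then show ?case by simp
next
  case (Suc j)
  have vD: "\<pi> (Suc j) (x (Suc j)) v \<in> D" using pres Suc.prems q by auto
  have "\<pi> q a (pi_prod \<pi> (Suc j) x v) = pi_prod \<pi> j x (\<pi> q a (\<pi> (Suc j) (x (Suc j)) v))"
    using Suc.IH[OF _ vD] Suc.prems by simp
  also have "\<pi> q a (\<pi> (Suc j) (x (Suc j)) v) = \<pi> (Suc j) (x (Suc j)) (\<pi> q a v)"
    using comm Suc.prems q by auto
  finally show ?case by simp
qed

lemma pp_act:
  assumes pres: "\<forall>q\<in>{1..m}. \<forall>a. \<forall>x\<in>D. \<pi> q a x \<in> D"
    and comm: "\<forall>q\<in>{1..m}. \<forall>q'\<in>{1..m}. q \<noteq> q' \<longrightarrow> (\<forall>a b. \<forall>x\<in>D. \<pi> q a (\<pi> q' b x) = \<pi> q' b (\<pi> q a x))"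
    and mult: "\<forall>q\<in>{1..m}. \<forall>a b. \<forall>x\<in>D. \<pi> q (a * b) x = \<pi> q a (\<pi> q b x)"
    and q: "1 \<le> q" and yq: "y q = a * x q" and yo: "\<forall>i. i \<noteq> q \<longrightarrow> y i = x i"
  shows "q \<le> j \<Longrightarrow> j \<le> m \<Longrightarrow> v \<in> D \<Longrightarrow> \<pi> q a (pi_prod \<pi> j x v) = pi_prod \<pi> j y v"
proof (induction j arbitrary: v)
  case 0 then show ?case using q by simp
next
  case (Suc j)
  have vD: "\<pi> (Suc j) (x (Suc j)) v \<in> D" using pres Suc.prems by auto
  show ?case
  proof (cases "q = Suc j")
    case True
    have "\<pi> q a (pi_prod \<pi> (Suc j) x v) = \<pi> q a (pi_prod \<pi> j x (\<pi> q (x q) v))"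
      using True by simp
    also have "\<dots> = pi_prod \<pi> j x (\<pi> q a (\<pi> q (x q) v))"
      by (rule pp_comm[OF pres comm]) (use True Suc.prems vD in auto)
    also have "\<pi> q a (\<pi> q (x q) v) = \<pi> q (y q) v" using mult Suc.prems True yq by auto
    also have "pi_prod \<pi> j x (\<pi> q (y q) v) = pi_prod \<pi> j y (\<pi> q (y q) v)"
      by (rule pp_cong) (use True yo in auto)
    also have "\<dots> = pi_prod \<pi> (Suc j) y v" using True by simp
    finally show ?thesis .
  next
    case False
    then have qj: "q \<le> j" using Suc.prems by simp
    have "\<pi> q a (pi_prod \<pi> (Suc j) x v) = \<pi> q a (pi_prod \<pi> j x (\<pi> (Suc j) (x (Suc j)) v))"
      by simp
    also have "\<dots> = pi_prod \<pi> j y (\<pi> (Suc j) (x (Suc j)) v)"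
      using Suc.IH[OF qj _ vD] Suc.prems by simp
    also have "x (Suc j) = y (Suc j)" using yo False by auto
    also have "pi_prod \<pi> j y (\<pi> (Suc j) (y (Suc j)) v) = pi_prod \<pi> (Suc j) y v" by simp
    finally show ?thesis .
  qed
qed

lemma pp_one:
  assumes one: "\<forall>q\<in>{1..m}. \<forall>x\<in>D. \<pi> q 1 x = x"
  shows "j \<le> m \<Longrightarrow> v \<in> D \<Longrightarrow> pi_prod \<pi> j (\<lambda>_. 1) v = v"
proof (induction j arbitrary: v)
  case 0 then show ?case by simp
next
  case (Suc j)
  have "\<pi> (Suc j) 1 v = v" using one Suc.prems by auto
  then show ?case using Suc by simp
qed


lemma qdomain_D:
  assumes "qdomain Ht E"
  shows "closed_csubspace Ht" "closed_csubspace (E l)" "E l \<subseteq> Ht" "l \<le> l' \<Longrightarrow> E l \<subseteq> E l'"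
    "closure (\<Union> (range E)) = Ht"
  using assms unfolding qdomain_def by auto

lemma lch_D:
  assumes "local_contractive_hom p Kt F \<pi>"
  shows "in_CE Kt F (\<pi> a)" "x \<in> qdom F \<Longrightarrow> \<pi> (a * b) x = \<pi> a (\<pi> b x)"
    "x \<in> qdom F \<Longrightarrow> \<pi> 1 x = x" "op_star_eq (qdom F) (\<pi> a) (\<pi> (star_op a))"
    "\<exists>\<alpha>. \<forall>a. \<forall>x\<in>F l. norm (\<pi> a x) \<le> p \<alpha> a * norm x"
  using assms unfolding local_contractive_hom_def by auto

lemma inCE_D:
  assumes "in_CE Ht E T"
  shows "x \<in> qdom E \<Longrightarrow> T x \<in> qdom E"
    "x \<in> qdom E \<Longrightarrow> y \<in> qdom E \<Longrightarrow> T (x + y) = T x + T y"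
    "x \<in> qdom E \<Longrightarrow> T (c *\<^sub>C x) = c *\<^sub>C T x"
    "x \<in> qdom E \<Longrightarrow> cproj (E l) (T x) = T (cproj (E l) x)"
    "\<exists>C. \<forall>x\<in>E l. norm (T x) \<le> C * norm x"
  using assms unfolding in_CE_def by auto


lemma lch_restrict:
  assumes L: "local_contractive_hom p Kt F \<pi>" and Q: "qdom F' \<subseteq> qdom F" and FF: "\<forall>l. F' l \<subseteq> F l"
    and C: "\<forall>a. in_CE Kt' F' (\<pi> a)"
  shows "local_contractive_hom p Kt' F' \<pi>"
  unfolding local_contractive_hom_def
proof (intro conjI)
  show "\<forall>a. in_CE Kt' F' (\<pi> a)" by (rule C)
  have L2: "\<forall>a b. \<forall>x\<in>qdom F. \<pi> (a + b) x = \<pi> a x + \<pi> b x" using L unfolding local_contractive_hom_def by (elim conjE)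
  then show "\<forall>a b. \<forall>x\<in>qdom F'. \<pi> (a + b) x = \<pi> a x + \<pi> b x" using Q by blast
  have L3: "\<forall>c a. \<forall>x\<in>qdom F. \<pi> (c *\<^sub>C a) x = c *\<^sub>C \<pi> a x" using L unfolding local_contractive_hom_def by (elim conjE)
  then show "\<forall>c a. \<forall>x\<in>qdom F'. \<pi> (c *\<^sub>C a) x = c *\<^sub>C \<pi> a x" using Q by blast
  have L4: "\<forall>a b. \<forall>x\<in>qdom F. \<pi> (a * b) x = \<pi> a (\<pi> b x)" using L unfolding local_contractive_hom_def by (elim conjE)
  then show "\<forall>a b. \<forall>x\<in>qdom F'. \<pi> (a * b) x = \<pi> a (\<pi> b x)" using Q by blast
  have L5: "\<forall>x\<in>qdom F. \<pi> 1 x = x" using L unfolding local_contractive_hom_def by (elim conjE)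
  then show "\<forall>x\<in>qdom F'. \<pi> 1 x = x" using Q by blast
  have L6: "\<forall>a. op_star_eq (qdom F) (\<pi> a) (\<pi> (star_op a))" using L unfolding local_contractive_hom_def by (elim conjE)
  then show "\<forall>a. op_star_eq (qdom F') (\<pi> a) (\<pi> (star_op a))" using Q unfolding op_star_eq_def by blast
  have L7: "\<forall>l. \<exists>\<alpha>. \<forall>a. \<forall>x\<in>F l. norm (\<pi> a x) \<le> p \<alpha> a * norm x" using L unfolding local_contractive_hom_def by (elim conjE)
  show "\<forall>l. \<exists>\<alpha>. \<forall>a. \<forall>x\<in>F' l. norm (\<pi> a x) \<le> p \<alpha> a * norm x"
  proof
    fix l
    obtain \<alpha> where "\<forall>a. \<forall>x\<in>F l. norm (\<pi> a x) \<le> p \<alpha> a * norm x" using L7 by blast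
    then have "\<forall>a. \<forall>x\<in>F' l. norm (\<pi> a x) \<le> p \<alpha> a * norm x" using FF by blast
    then show "\<exists>\<alpha>. \<forall>a. \<forall>x\<in>F' l. norm (\<pi> a x) \<le> p \<alpha> a * norm x" by blast
  qed
qed

theorem proposition4p2:
  fixes p :: "'i \<Rightarrow> 'a::star_algebra \<Rightarrow> real"
    and E :: "'l::preorder \<Rightarrow> 'h::chilbert_space set"
    and k :: nat
    and \<phi> :: "'a list \<Rightarrow> 'h \<Rightarrow> 'h"
    and \<pi> :: "nat \<Rightarrow> 'a \<Rightarrow> 'k::chilbert_space \<Rightarrow> 'k"
    and V :: "'h \<Rightarrow> 'k"
    and F :: "'l \<Rightarrow> 'k set"
  assumes "locally_C_star_algebra p"
    and "\<forall>l1 l2 :: 'l. \<exists>l3. l1 \<le> l3 \<and> l2 \<le> l3"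
    and "qdomain (UNIV :: 'h set) E"
    and "1 \<le> k"
    and "ICPCC p E k \<phi>"
    and "stinespring_triple p E k \<phi> \<pi> V UNIV F"
  shows "\<exists>Kt F' \<pi>' V'. stinespring_triple p E k \<phi> \<pi>' V' Kt F'
           \<and> (\<forall>l. F' l \<subseteq> F l) \<and> minimal_triple E k \<pi>' V' F'"
proof -
  define m where "m = (k + 1) div 2"
  note st = assms(6)[unfolded stinespring_triple_def Let_def, folded m_def]
  have qF: "qdomain UNIV F" using st by (rule conjunct1)
  note c2 = st[THEN conjunct2]
  have Vadd: "\<forall>x y. V (x + y) = V x + V y" using c2 by (rule conjunct1)
  note c3 = c2[THEN conjunct2]
  have Vsc: "\<forall>c x. V (c *\<^sub>C x) = c *\<^sub>C V x" using c3 by (rule conjunct1)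
  note c4 = c3[THEN conjunct2]
  have Vn: "\<forall>h. norm (V h) \<le> norm h" using c4 by (rule conjunct1)
  note c5 = c4[THEN conjunct2, THEN conjunct2]
  have VE: "\<forall>l. V ` E l \<subseteq> F l" using c5 by (rule conjunct1)
  note c6 = c5[THEN conjunct2]
  have lch: "\<forall>q\<in>{1..m}. local_contractive_hom p UNIV F (\<pi> q)" using c6 by (rule conjunct1)
  note c7 = c6[THEN conjunct2]
  have comm: "\<forall>q\<in>{1..m}. \<forall>q'\<in>{1..m}. q \<noteq> q' \<longrightarrow>
        (\<forall>a b. \<forall>x\<in>qdom F. \<pi> q a (\<pi> q' b x) = \<pi> q' b (\<pi> q a x))" using c7 by (rule conjunct1)
  have form: "\<forall>as. length as = k \<longrightarrow> (\<forall>h\<in>qdom E. \<phi> as h = cadj V (pi_prod \<pi> m (stine_args k as) (V h)))"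
    using c7 by (rule conjunct2)
  have Fcl: "closed_csubspace (F l)" for l using qdomain_D(2)[OF qF] .
  have Fsub: "csubspace (F l)" for l using Fcl unfolding closed_csubspace_def by (rule conjunct1)
  have Fclosed: "closed (F l)" for l using Fcl unfolding closed_csubspace_def by (rule conjunct2)
  have FD: "F l \<subseteq> qdom F" for l unfolding qdom_def by auto
  have Emono: "l \<le> l' \<Longrightarrow> E l \<subseteq> E l'" for l l' using qdomain_D(4)[OF assms(3)] .
  have Eclos: "closure (\<Union> (range E)) = UNIV" using qdomain_D(5)[OF assms(3)] .

  have lchq: "local_contractive_hom p UNIV F (\<pi> q)" if "q \<in> {1..m}" for q
    using lch that by blast
  have inCE: "in_CE UNIV F (\<pi> q a)" if "q \<in> {1..m}" for q a
    using lch_D(1)[OF lchq[OF that]] .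
  have presD: "\<forall>q\<in>{1..m}. \<forall>a. \<forall>x\<in>qdom F. \<pi> q a x \<in> qdom F"
    using inCE_D(1)[OF inCE] by blast
  have padd: "\<pi> q a (x + y) = \<pi> q a x + \<pi> q a y" if "q \<in> {1..m}" "x \<in> qdom F" "y \<in> qdom F" for q a x y
    using inCE_D(2)[OF inCE[OF that(1)] that(2,3)] .
  have psc: "\<pi> q a (c *\<^sub>C x) = c *\<^sub>C \<pi> q a x" if "q \<in> {1..m}" "x \<in> qdom F" for q a c x
    using inCE_D(3)[OF inCE[OF that(1)] that(2)] .
  have pcp: "cproj (F l) (\<pi> q a x) = \<pi> q a (cproj (F l) x)" if "q \<in> {1..m}" "x \<in> qdom F" for q a l x
    using inCE_D(4)[OF inCE[OF that(1)] that(2)] .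
  have pC: "\<exists>C. \<forall>x\<in>F l. norm (\<pi> q a x) \<le> C * norm x" if "q \<in> {1..m}" for q a l
    using inCE_D(5)[OF inCE[OF that(1)]] .
  have pmul: "\<forall>q\<in>{1..m}. \<forall>a b. \<forall>x\<in>qdom F. \<pi> q (a * b) x = \<pi> q a (\<pi> q b x)"
    using lch_D(2)[OF lchq] by blast
  have pone: "\<forall>q\<in>{1..m}. \<forall>x\<in>qdom F. \<pi> q 1 x = x"
    using lch_D(3)[OF lchq] by blast
  have pstar: "op_star_eq (qdom F) (\<pi> q a) (\<pi> q (star_op a))" if "q \<in> {1..m}" for q a
    using lch_D(4)[OF lchq[OF that]] .
  have pbnd: "\<exists>\<alpha>. \<forall>a. \<forall>x\<in>F l. norm (\<pi> q a x) \<le> p \<alpha> a * norm x" if "q \<in> {1..m}" for q l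
    using lch_D(5)[OF lchq[OF that]] .
  have pres_l: "\<forall>q\<in>{1..m}. \<forall>a. \<forall>x\<in>F l. \<pi> q a x \<in> F l" for l
  proof (intro ballI allI)
    fix q a x assume q: "q \<in> {1..m}" and x: "x \<in> F l"
    have xq: "x \<in> qdom F" using FD x by blast
    have "cproj (F l) (\<pi> q a x) = \<pi> q a (cproj (F l) x)" by (rule pcp[OF q xq])
    also have "cproj (F l) x = x" by (rule cproj_id[OF Fcl x])
    finally have "cproj (F l) (\<pi> q a x) = \<pi> q a x" .
    then show "\<pi> q a x \<in> F l" using cproj_in(1)[OF Fcl[of l], of "\<pi> q a x"] by simp
  qed
  have pdiff: "\<pi> q a (x - y) = \<pi> q a x - \<pi> q a y" if "q \<in> {1..m}" "x \<in> F l" "y \<in> F l" for q a x y l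
  proof -
    have y': "(-1) *\<^sub>C y \<in> qdom F" using csubspace_scaleC[OF Fsub that(3)] FD by blast
    have xD: "x \<in> qdom F" "y \<in> qdom F" using that FD by blast+
    have "\<pi> q a (x - y) = \<pi> q a (x + (-1) *\<^sub>C y)" by (simp add: scaleC_minus1)
    also have "\<dots> = \<pi> q a x + \<pi> q a ((-1) *\<^sub>C y)" by (rule padd[OF that(1) xD(1) y'])
    also have "\<dots> = \<pi> q a x + (-1) *\<^sub>C \<pi> q a y" using psc[OF that(1) xD(2)] by simp
    finally show ?thesis by (simp add: scaleC_minus1)
  qed
  have p0: "\<pi> q a 0 = 0" if "q \<in> {1..m}" for q a
  proof -
    have z: "(0::'k) \<in> qdom F" using FD csubspace_0[OF Fsub] by blast
    have "\<pi> q a 0 = \<pi> q a (0 + 0)" by simp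
    also have "\<dots> = \<pi> q a 0 + \<pi> q a 0" using padd[OF that z z] .
    finally show ?thesis by simp
  qed

  define G where "G l = {pi_prod \<pi> m x (V h) | x h. h \<in> E l}" for l
  define F' where "F' l = closure (cspan (G l))" for l
  define Kt where "Kt = closure (\<Union> (range F'))"

  have GF: "G l \<subseteq> F l" for l
  proof
    fix g assume "g \<in> G l"
    then obtain x h where g: "g = pi_prod \<pi> m x (V h)" "h \<in> E l" unfolding G_def by blast
    have vh: "V h \<in> F l" using VE g(2) by blast
    show "g \<in> F l" unfolding g(1) by (rule pp_D[where \<pi>=\<pi> and m=m and D="F l", OF pres_l _ vh]) simp
  qed
  have F'F: "F' l \<subseteq> F l" for l
    unfolding F'_def by (rule closure_minimal[OF cspan_least[OF Fsub GF] Fclosed])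
  have F'cl: "closed_csubspace (F' l)" for l
    unfolding F'_def closed_csubspace_def using closure_csubspace[OF cspan_sub] by simp
  have F'sub: "csubspace (F' l)" for l using F'cl unfolding closed_csubspace_def by (rule conjunct1)
  have F'D: "F' l \<subseteq> qdom F" for l using F'F FD by blast
  have Gmono: "G l \<subseteq> G l'" if "l \<le> l'" for l l' unfolding G_def using Emono[OF that] by blast
  have F'mono: "F' l \<subseteq> F' l'" if "l \<le> l'" for l l'
    unfolding F'_def by (rule closure_mono[OF cspan_least[OF cspan_sub]]) (use Gmono[OF that] cspan_sup in blast)
  have F'qd: "qdom F' \<subseteq> qdom F" unfolding qdom_def using F'F by blast
  have Gsp: "G l \<subseteq> F' l" for l unfolding F'_def using cspan_sup closure_subset by blast
  have VF': "V h \<in> F' l" if "h \<in> E l" for h l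
  proof -
    have vh: "V h \<in> qdom F" using VE that FD by blast
    have pp: "pi_prod \<pi> m (\<lambda>_. 1) (V h) = V h" by (rule pp_one[where \<pi>=\<pi> and m=m and D="qdom F", OF pone _ vh]) simp
    have "V h \<in> G l" unfolding G_def mem_Collect_eq
      by (intro exI[of _ "\<lambda>_. 1"] exI[of _ h] conjI) (use pp that in auto)
    then show ?thesis using Gsp by blast
  qed
  have inv: "\<pi> q a x \<in> F' l" if q: "q \<in> {1..m}" and x: "x \<in> F' l" for q a x l
  proof -
    obtain C where C: "\<forall>x\<in>F l. norm (\<pi> q a x) \<le> C * norm x" using pC[OF q] by blast
    define S where "S = {y \<in> F l. \<pi> q a y \<in> cspan (G l)}"
    have Ssub: "csubspace S" unfolding csubspace_def
    proof (intro conjI ballI allI)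
      show "0 \<in> S" unfolding S_def using p0[OF q] csubspace_0[OF Fsub] csubspace_0[OF cspan_sub] by simp
    next
      fix y z assume "y \<in> S" "z \<in> S"
      then have yz: "y \<in> F l" "z \<in> F l" "\<pi> q a y \<in> cspan (G l)" "\<pi> q a z \<in> cspan (G l)" unfolding S_def by auto
      have "\<pi> q a (y + z) = \<pi> q a y + \<pi> q a z" using padd[OF q] yz(1,2) FD by blast
      then show "y + z \<in> S" unfolding S_def using yz csubspace_add[OF Fsub] csubspace_add[OF cspan_sub] by simp
    next
      fix c y assume "y \<in> S"
      then have yz: "y \<in> F l" "\<pi> q a y \<in> cspan (G l)" unfolding S_def by auto
      have "\<pi> q a (c *\<^sub>C y) = c *\<^sub>C \<pi> q a y" using psc[OF q] yz(1) FD by blast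
      then show "c *\<^sub>C y \<in> S" unfolding S_def using yz csubspace_scaleC[OF Fsub] csubspace_scaleC[OF cspan_sub] by simp
    qed
    have GS: "G l \<subseteq> S"
    proof
      fix g assume gG: "g \<in> G l"
      then obtain xx h where g: "g = pi_prod \<pi> m xx (V h)" "h \<in> E l" unfolding G_def by blast
      have vh: "V h \<in> qdom F" using VE g(2) FD by blast
      have q1: "1 \<le> q" "q \<le> m" using q by auto
      have "\<pi> q a (pi_prod \<pi> m xx (V h)) = pi_prod \<pi> m (xx(q := a * xx q)) (V h)"
        by (rule pp_act[where \<pi>=\<pi> and m=m and D="qdom F", OF presD comm pmul q1(1)]) (use q1 vh in auto)
      moreover have "pi_prod \<pi> m (xx(q := a * xx q)) (V h) \<in> G l" unfolding G_def using g(2) by blast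
      ultimately have "\<pi> q a g \<in> cspan (G l)" using g(1) cspan_sup by auto
      then show "g \<in> S" unfolding S_def using gG GF by blast
    qed
    have TB: "\<forall>y\<in>cspan (G l). \<pi> q a y \<in> cspan (G l)"
      using cspan_least[OF Ssub GS] unfolding S_def by blast
    have "\<pi> q a x \<in> closure (cspan (G l))"
    proof (rule closure_invariant[where A="F l" and B="cspan (G l)" and C="cspan (G l)" and T="\<pi> q a" and c=C])
      show "closed (F l)" by (rule Fclosed)
      show "cspan (G l) \<subseteq> F l" by (rule cspan_least[OF Fsub GF])
      show "\<forall>x\<in>cspan (G l). \<pi> q a x \<in> cspan (G l)" by (rule TB)
      show "\<forall>x\<in>F l. \<forall>y\<in>F l. \<pi> q a (x - y) = \<pi> q a x - \<pi> q a y" using pdiff[OF q] by blast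
      show "\<forall>x\<in>F l. \<forall>y\<in>F l. x - y \<in> F l" using csubspace_diff[OF Fsub] by blast
      show "\<forall>x\<in>F l. norm (\<pi> q a x) \<le> C * norm x" by (rule C)
      show "x \<in> closure (cspan (G l))" using x unfolding F'_def .
    qed
    then show ?thesis unfolding F'_def .
  qed

  have Usub: "csubspace (\<Union> (range F'))" unfolding csubspace_def
  proof (intro conjI ballI allI)
    show "0 \<in> \<Union> (range F')" using csubspace_0[OF F'sub[of undefined]] by blast
  next
    fix x y assume "x \<in> \<Union> (range F')" "y \<in> \<Union> (range F')"
    then obtain l1 l2 where l: "x \<in> F' l1" "y \<in> F' l2" by blast
    obtain l3 where l3: "l1 \<le> l3" "l2 \<le> l3" using assms(2) by blast
    have "x \<in> F' l3" "y \<in> F' l3" using l F'mono[OF l3(1)] F'mono[OF l3(2)] by blast+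
    then have "x + y \<in> F' l3" by (rule csubspace_add[OF F'sub])
    then show "x + y \<in> \<Union> (range F')" by blast
  next
    fix c x assume "x \<in> \<Union> (range F')"
    then obtain l1 where l: "x \<in> F' l1" by blast
    then have "c *\<^sub>C x \<in> F' l1" by (rule csubspace_scaleC[OF F'sub])
    then show "c *\<^sub>C x \<in> \<Union> (range F')" by blast
  qed
  have Kcl: "closed_csubspace Kt" unfolding Kt_def closed_csubspace_def
    using closure_csubspace[OF Usub] by simp
  have QD: "qdomain Kt F'" unfolding qdomain_def
  proof (intro conjI allI impI)
    show "closed_csubspace Kt" by (rule Kcl)
    fix l show "closed_csubspace (F' l)" by (rule F'cl)
    show "F' l \<subseteq> Kt" unfolding Kt_def using closure_subset[of "\<Union> (range F')"] by blast
  next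
    fix l l' :: 'l assume "l \<le> l'" then show "F' l \<subseteq> F' l'" by (rule F'mono)
  next
    show "closure (\<Union> (range F')) = Kt" by (simp only: Kt_def)
  qed
  have blV: "bounded_linear V"
  proof (rule bounded_linear_intro[where K=1])
    fix x y show "V (x + y) = V x + V y" using Vadd by blast
  next
    fix r x show "V (r *\<^sub>R x) = r *\<^sub>R V x" using Vsc by (simp add: scaleR_scaleC)
  next
    fix x show "norm (V x) \<le> norm x * 1" using Vn by simp
  qed
  have "V ` closure (\<Union> (range E)) \<subseteq> Kt"
  proof (rule image_closure_subset)
    show "continuous_on (closure (\<Union> (range E))) V" by (rule linear_continuous_on[OF blV])
    show "closed Kt" unfolding Kt_def by simp
    show "V ` \<Union> (range E) \<subseteq> Kt" unfolding Kt_def using VF' closure_subset by blast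
  qed
  then have VK: "\<forall>h. V h \<in> Kt" using Eclos by blast

  have inCE': "in_CE Kt F' (\<pi> q a)" if q: "q \<in> {1..m}" for q a
    unfolding in_CE_def
  proof (intro conjI ballI allI)
    fix x assume "x \<in> qdom F'"
    then obtain l where "x \<in> F' l" unfolding qdom_def by blast
    then have "\<pi> q a x \<in> F' l" by (rule inv[OF q])
    then show "\<pi> q a x \<in> qdom F'" unfolding qdom_def by blast
  next
    fix x y assume "x \<in> qdom F'" "y \<in> qdom F'"
    then show "\<pi> q a (x + y) = \<pi> q a x + \<pi> q a y" using padd[OF q] F'qd by blast
  next
    fix c x assume "x \<in> qdom F'"
    then show "\<pi> q a (c *\<^sub>C x) = c *\<^sub>C \<pi> q a x" using psc[OF q] F'qd by blast
  next
    fix l x assume "x \<in> Kt"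
    have P: "cproj (F' l) x \<in> F' l" by (rule cproj_in(1)[OF F'cl])
    have "\<pi> q a (cproj (F' l) x) \<in> F' l" by (rule inv[OF q P])
    then show "\<pi> q a (cproj (F' l) x) = cproj (F' l) (\<pi> q a (cproj (F' l) x))"
      using cproj_id[OF F'cl] by simp
  next
    fix l x assume "x \<in> qdom F'"
    then obtain l0 where x0: "x \<in> F' l0" unfolding qdom_def by blast
    obtain l3 where l3: "l \<le> l3" "l0 \<le> l3" using assms(2) by blast
    define P where "P = cproj (F' l) x"
    have P: "P \<in> F' l" unfolding P_def by (rule cproj_in(1)[OF F'cl])
    have P3: "P \<in> F' l3" using P F'mono[OF l3(1)] by blast
    have x3: "x \<in> F' l3" using x0 F'mono[OF l3(2)] by blast
    have TP: "\<pi> q a P \<in> F' l" by (rule inv[OF q P])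
    have "cproj (F' l) (\<pi> q a x) = \<pi> q a P"
    proof (rule cproj_unique[OF F'cl TP], rule ballI)
      fix z assume z: "z \<in> F' l"
      have "\<pi> q a x - \<pi> q a P = \<pi> q a (x - P)"
      proof -
        have xF: "x \<in> F l3" and PF: "P \<in> F l3" using x3 P3 F'F[of l3] by blast+
        show ?thesis using pdiff[OF q xF PF] by (rule sym)
      qed
      moreover have "cinner (\<pi> q a (x - P)) z = cinner (x - P) (\<pi> q (star_op a) z)"
      proof -
        have w: "x - P \<in> qdom F" using csubspace_diff[OF F'sub x3 P3] F'D by blast
        have zD: "z \<in> qdom F" using z F'D by blast
        show ?thesis using pstar[OF q, of a] w zD unfolding op_star_eq_def by blast
      qed
      moreover have "cinner (x - P) (\<pi> q (star_op a) z) = 0"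
        using cproj_in(2)[OF F'cl, of l x] inv[OF q z] unfolding P_def by blast
      ultimately show "cinner (\<pi> q a x - \<pi> q a P) z = 0" by simp
    qed
    then show "cproj (F' l) (\<pi> q a x) = \<pi> q a (cproj (F' l) x)" unfolding P_def .
  next
    fix l
    obtain C where "\<forall>x\<in>F l. norm (\<pi> q a x) \<le> C * norm x" using pC[OF q] by blast
    then show "\<exists>C. \<forall>x\<in>F' l. norm (\<pi> q a x) \<le> C * norm x" using F'F by blast
  qed

  have ST: "stinespring_triple p E k \<phi> \<pi> V Kt F'"
    unfolding stinespring_triple_def Let_def m_def[symmetric]
  proof (intro conjI)
    show "qdomain Kt F'" by (rule QD)
    show "\<forall>x y. V (x + y) = V x + V y" by (rule Vadd)
    show "\<forall>c x. V (c *\<^sub>C x) = c *\<^sub>C V x" by (rule Vsc)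
    show "\<forall>h. norm (V h) \<le> norm h" by (rule Vn)
    show "\<forall>h. V h \<in> Kt" by (rule VK)
    show "\<forall>l. V ` E l \<subseteq> F' l" using VF' by blast
    show "\<forall>q\<in>{1..m}. local_contractive_hom p Kt F' (\<pi> q)"
    proof
      fix q assume q: "q \<in> {1..m}"
      show "local_contractive_hom p Kt F' (\<pi> q)"
        by (rule lch_restrict[OF lchq[OF q] F'qd]) (use F'F inCE'[OF q] in blast)+
    qed
    show "\<forall>q\<in>{1..m}. \<forall>q'\<in>{1..m}. q \<noteq> q' \<longrightarrow>
        (\<forall>a b. \<forall>x\<in>qdom F'. \<pi> q a (\<pi> q' b x) = \<pi> q' b (\<pi> q a x))"
      using comm F'qd by blast
    show "\<forall>as. length as = k \<longrightarrow> (\<forall>h\<in>qdom E. \<phi> as h = cadj V (pi_prod \<pi> m (stine_args k as) (V h)))"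
      by (rule form)
  qed
  have MIN: "minimal_triple E k \<pi> V F'"
    unfolding minimal_triple_def m_def[symmetric] F'_def G_def by simp
  show ?thesis using ST F'F MIN by blast
qed

end
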